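(* Let $N\ge 4$ and define the holomorphic map $\Phi_N\colon \mathbb{C}^N\to \mathrm{SL}_2(\mathbb{C})$ by $$\Phi_N(z_1,\dots,z_N)=M_1(z_1)M_2(z_2)\cdots M_N(z_N),$$ where for $t\in\mathbb{C}$ we set $M_j(t)=\begin{pmatrix}1&0\\ t&1\end{pmatrix}$ if $j$ is odd and $M_j(t)=\begin{pmatrix}1&t\\ 0&1\end{pmatrix}$ if $j$ is even. Then $\Phi_N$ is a submersion at a point $z\in\mathbb{C}^N$ if and only if $z\notin\{(z_1,0,\dots,0,z_N): z_1,z_N\in\mathbb{C}\}$, i.e. if and only if $z_i\neq 0$ for some $2\le i\le N-1$. *)

theory Defs
  imports "HOL-Analysis.Analysis"
begin

text \<open>Coordinates of \<open>\<complex>^N\<close> are indexed by a finite linearly ordered type \<open>'n\<close>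
  with \<open>N = CARD('n)\<close>; \<open>idx i\<close> is the 0-based position of \<open>i\<close>
  (so the paper's index \<open>j\<close> of \<open>i\<close> is \<open>idx i + 1\<close>).\<close>

definition idx :: "'n::{finite,linorder} \<Rightarrow> nat" where
  "idx i = card {j. j < i}"

definition Mmat :: "nat \<Rightarrow> complex \<Rightarrow> complex^2^2" where
  "Mmat j t = (if odd j then vector [vector [1, 0], vector [t, 1]]
                        else vector [vector [1, t], vector [0, 1]])"

definition Phi :: "complex^'n::{finite,linorder} \<Rightarrow> complex^2^2" where
  "Phi z = foldr (\<lambda>i A. Mmat (idx i + 1) (z $ i) ** A) (sorted_list_of_set UNIV) (mat 1)"

definition SL2_tangent :: "complex^2^2 \<Rightarrow> (complex^2^2) set" where
  "SL2_tangent A = {A ** Y | Y. trace Y = 0}"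

definition submersion_SL2_at :: "('a::real_normed_vector \<Rightarrow> complex^2^2) \<Rightarrow> 'a \<Rightarrow> bool" where
  "submersion_SL2_at f z \<longleftrightarrow>
     (\<exists>D. (f has_derivative D) (at z) \<and> range D = SL2_tangent (f z))"

end

theory Submission
  imports Defs
begin


definition det2 :: "complex^2^2 \<Rightarrow> complex" where
  "det2 A = A$1$1 * A$2$2 - A$1$2 * A$2$1"
definition adj2 :: "complex^2^2 \<Rightarrow> complex^2^2" where
  "adj2 A = vector [vector [A$2$2, - A$1$2], vector [- A$2$1, A$1$1]]"
definition Emat :: "nat \<Rightarrow> complex \<Rightarrow> complex^2^2" where
  "Emat j t = (if odd j then vector [vector [0, 0], vector [t, 0]]
                        else vector [vector [0, t], vector [0, 0]])"

lemmas m2 = vec_eq_iff forall_2 matrix_matrix_mult_def sum_2 mat_def det2_def adj2_def Emat_def Mmat_def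

lemma det2_mult: "det2 (A ** B) = det2 A * det2 B"
  by (simp add: m2 algebra_simps)
lemma adj2_right: "det2 A = 1 \<Longrightarrow> A ** adj2 A = mat 1"
  by (auto simp add: m2 algebra_simps)
lemma adj2_left: "det2 A = 1 \<Longrightarrow> adj2 A ** A = mat 1"
  by (auto simp add: m2 algebra_simps)
lemma det2_Mmat: "det2 (Mmat j t) = 1"
  by (simp add: m2)
lemma Mmat_Emat: "Mmat j t ** Emat j c = Emat j c"
  by (simp add: m2)
lemma Emat_add: "Emat j (a + b) = Emat j a + Emat j b"
  by (simp add: m2)
lemma Emat_0[simp]: "Emat j 0 = 0"
  by (simp add: m2)
lemma Mmat_eq: "Mmat j t = mat 1 + Emat j t"
  by (simp add: m2)
lemma trace_Emat: "trace (Emat j c) = 0"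
  by (simp add: trace_def m2)
lemma bilin: "bilinear (\<lambda>A B :: complex^2^2. A ** B)"
  unfolding bilinear_def linear_iff
  by (auto simp: m2 algebra_simps)


lemma adj2_mult: "adj2 (A ** B) = adj2 B ** adj2 A"
  by (simp add: m2 algebra_simps)
lemma adj2_I[simp]: "adj2 (mat 1) = mat 1"
  by (simp add: m2)
lemma det2_I[simp]: "det2 (mat 1) = 1"
  by (simp add: m2)
lemma Mmat_0: "Mmat j 0 = mat 1"
  by (simp add: m2)
lemma comm_Mmat: "adj2 (Mmat j t) ** Emat j c ** Mmat j t = Emat j c"
  by (simp add: m2 algebra_simps)
lemma conj_Mmat: "(Mmat j t ** Emat j c ** adj2 (Mmat j t))$1$1 = 0"
  by (simp add: m2 algebra_simps)
lemma diag_lem: "(A ** (adj2 A ** Emat j c ** A) ** adj2 A)$1$1 = 0" if "det2 A = 1"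
proof -
  have "A ** (adj2 A ** Emat j c ** A) ** adj2 A = (A ** adj2 A) ** Emat j c ** (A ** adj2 A)"
    by (simp add: matrix_mul_assoc)
  also have "\<dots> = Emat j c" using adj2_right[OF that] by simp
  finally show ?thesis by (simp add: m2)
qed
lemma trace_sum: "trace (sum f S) = (\<Sum>x\<in>S. trace (f x))"
  by (simp add: trace_def sum.swap[of _ UNIV S])

lemma solve_lem:
  assumes "t \<noteq> 0" "trace Y = 0"
  shows "\<exists>a b c. adj2 (Mmat (Suc j) t) ** Emat j a ** Mmat (Suc j) t + Emat (Suc j) b + Emat (Suc (Suc j)) c = Y"
proof (cases "odd j")
  case True
  have tr: "Y$2$2 = - Y$1$1" using assms(2) by (simp add: trace_def sum_2 add_eq_0_iff)
  let ?a = "- Y$1$1 / t"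
  show ?thesis
    apply (rule exI[of _ ?a], rule exI[of _ "Y$1$2 + t^2 * ?a"], rule exI[of _ "Y$2$1 - ?a"])
    using True assms(1) tr by (auto simp: m2 field_simps power2_eq_square)
next
  case False
  have tr: "Y$2$2 = - Y$1$1" using assms(2) by (simp add: trace_def sum_2 add_eq_0_iff)
  let ?a = "Y$1$1 / t"
  show ?thesis
    apply (rule exI[of _ ?a], rule exI[of _ "Y$2$1 + t^2 * ?a"], rule exI[of _ "Y$1$2 - ?a"])
    using False assms(1) tr by (auto simp: m2 field_simps power2_eq_square)
qed



definition pos :: "nat \<Rightarrow> 'n::{finite,linorder}" where
  "pos p = sorted_list_of_set UNIV ! p"

definition FF :: "complex^'n::{finite,linorder} \<Rightarrow> nat list \<Rightarrow> complex^2^2" where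
  "FF z ps = foldr (\<lambda>p A. Mmat (p+1) (z $ pos p) ** A) ps (mat 1)"

definition DF :: "complex^'n::{finite,linorder} \<Rightarrow> nat list \<Rightarrow> complex^'n::{finite,linorder} \<Rightarrow> complex^2^2" where
  "DF z ps h = (\<Sum>k<length ps. FF z (take k ps) ** Emat (ps!k + 1) (h $ pos (ps!k)) ** FF z (drop (Suc k) ps))"

interpretation bb: bounded_bilinear "\<lambda>A B :: complex^2^2. A ** B"
  using bilin bilinear_conv_bounded_bilinear by blast

lemma FF_Nil[simp]: "FF z [] = mat 1" by (simp add: FF_def)
lemma FF_Cons[simp]: "FF z (p # ps) = Mmat (p+1) (z $ pos p) ** FF z ps" by (simp add: FF_def)
lemma FF_append: "FF z (ps @ qs) = FF z ps ** FF z qs"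
  by (induction ps) (auto simp: matrix_mul_assoc)
lemma det2_FF: "det2 (FF z ps) = 1"
  by (induction ps) (auto simp: det2_mult det2_Mmat)

lemma lin_E: "bounded_linear (\<lambda>h::complex^'n. Emat j (h $ i))"
proof -
  have "linear (\<lambda>h::complex^'n. Emat j (h $ i))"
    unfolding linear_iff by (auto simp: m2)
  then show ?thesis using linear_conv_bounded_linear by blast
qed

lemma DF_Cons: "DF z (p # ps) h = Emat (p+1) (h $ pos p) ** FF z ps + Mmat (p+1) (z $ pos p) ** DF z ps h"
  unfolding DF_def length_Cons sum.lessThan_Suc_shift
  by (simp add: bb.sum_right matrix_mul_assoc)

lemma FF_deriv: "((\<lambda>z. FF z ps) has_derivative DF z ps) (at z)"
proof (induction ps)
  case Nil
  then show ?case by (simp add: DF_def)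
next
  case (Cons p ps)
  have e: "(\<lambda>z. Mmat (p+1) (z $ pos p)) = (\<lambda>z. mat 1 + Emat (p+1) (z $ pos p))"
    by (simp add: Mmat_eq)
  have d1: "((\<lambda>z. Mmat (p+1) (z $ pos p)) has_derivative (\<lambda>h. Emat (p+1) (h $ pos p))) (at z)"
  proof -
    have "((\<lambda>z. mat 1 + Emat (p+1) (z $ pos p)) has_derivative (\<lambda>h. 0 + Emat (p+1) (h $ pos p))) (at z)"
      by (intro has_derivative_add has_derivative_const bounded_linear_imp_has_derivative lin_E)
    then show ?thesis unfolding e by simp
  qed
  show ?case
    using bb.FDERIV[OF d1 Cons.IH] by (simp add: DF_Cons add.commute)
qed



lemma len_xs: "length (sorted_list_of_set (UNIV::'n::{finite,linorder} set)) = CARD('n)"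
  by simp

lemma idx_pos: "p < CARD('n) \<Longrightarrow> idx (pos p :: 'n::{finite,linorder}) = p"
proof -
  assume p: "p < CARD('n)"
  define xs where "xs = sorted_list_of_set (UNIV::'n set)"
  have len: "length xs = CARD('n)" by (simp add: xs_def)
  have ss: "sorted_wrt (<) xs" by (simp add: xs_def)
  have dis: "distinct xs" by (simp add: xs_def)
  have st: "set xs = UNIV" by (simp add: xs_def)
  have "{j. j < xs!p} = (\<lambda>q. xs!q) ` {..<p}"
  proof (intro set_eqI iffI)
    fix j assume "j \<in> {j. j < xs!p}"
    hence jl: "j < xs!p" by simp
    have "j \<in> set xs" using st by simp
    then obtain q where q: "q < length xs" "xs!q = j" by (auto simp: in_set_conv_nth)
    have "q < p"
    proof (rule ccontr)
      assume "\<not> q < p"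
      hence "p \<le> q" by simp
      hence "xs!p \<le> xs!q" using q(1)
        by (metis order.order_iff_strict sorted_wrt_nth_less ss)
      thus False using jl q(2) by simp
    qed
    thus "j \<in> (\<lambda>q. xs!q) ` {..<p}" using q by auto
  next
    fix j assume "j \<in> (\<lambda>q. xs!q) ` {..<p}"
    then obtain q where "q < p" "j = xs!q" by auto
    thus "j \<in> {j. j < xs!p}" using sorted_wrt_nth_less[OF ss, of q p] p len by auto
  qed
  moreover have "inj_on (\<lambda>q. xs!q) {..<p}"
    using dis p len by (auto simp: inj_on_def nth_eq_iff_index_eq)
  ultimately have "card {j. j < xs!p} = p" by (simp add: card_image)
  thus ?thesis by (simp add: idx_def pos_def xs_def)
qed

lemma pos_idx: "pos (idx (i::'n::{finite,linorder})) = i"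
proof -
  define xs where "xs = sorted_list_of_set (UNIV::'n set)"
  have "i \<in> set xs" by (simp add: xs_def)
  then obtain q where q: "q < length xs" "xs!q = i" by (auto simp: in_set_conv_nth)
  hence "q < CARD('n)" by (simp add: xs_def)
  hence "idx (pos q :: 'n) = q" by (rule idx_pos)
  thus ?thesis using q by (simp add: pos_def xs_def)
qed

lemma idx_less: "idx (i::'n::{finite,linorder}) < CARD('n)"
proof -
  have "{j. j < i} \<subset> UNIV" by auto
  thus ?thesis unfolding idx_def by (simp add: psubset_card_mono)
qed

lemma Phi_FF: "Phi (z::complex^'n::{finite,linorder}) = FF z [0..<CARD('n)]"
proof -
  define xs where "xs = sorted_list_of_set (UNIV::'n set)"
  have "xs = map (\<lambda>p. pos p) [0..<CARD('n)]"
    unfolding pos_def xs_def by (metis len_xs map_nth)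
  hence "Phi z = foldr (\<lambda>p A. Mmat (idx (pos p :: 'n) + 1) (z $ pos p) ** A) [0..<CARD('n)] (mat 1)"
    by (simp add: Phi_def xs_def[symmetric] foldr_map o_def)
  also have "\<dots> = FF z [0..<CARD('n)]"
    unfolding FF_def by (rule foldr_cong) (auto simp: idx_pos)
  finally show ?thesis .
qed

lemma DF_full: "DF z [0..<n] h = (\<Sum>q<n. FF z [0..<q] ** Emat (q+1) (h $ pos q) ** FF z [Suc q..<n])"
  unfolding DF_def by (intro sum.cong) auto



definition TT :: "complex^'n::{finite,linorder} \<Rightarrow> nat \<Rightarrow> nat \<Rightarrow> complex \<Rightarrow> complex^2^2" where
  "TT z n q c = adj2 (FF z [Suc q..<n]) ** Emat (q+1) c ** FF z [Suc q..<n]"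

lemma cancel_left: "det2 A = 1 \<Longrightarrow> A ** X = A ** Y \<Longrightarrow> X = Y"
  by (metis adj2_left matrix_mul_assoc matrix_mul_lid)

lemma term_eq:
  assumes "q < n"
  shows "FF z [0..<q] ** Emat (q+1) c ** FF z [Suc q..<n] = FF z [0..<n] ** TT z n q c"
proof -
  let ?L = "FF z [0..<q]" and ?M = "Mmat (q+1) (z $ pos q)" and ?R = "FF z [Suc q..<n]"
  have "[0..<n] = [0..<q] @ [q..<n]" using upt_add_eq_append[of 0 q "n-q"] assms by simp
  also have "[q..<n] = q # [Suc q..<n]" using assms by (simp add: upt_conv_Cons)
  finally have "[0..<n] = [0..<q] @ q # [Suc q..<n]" .
  hence F: "FF z [0..<n] = ?L ** (?M ** ?R)" by (simp add: FF_append)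
  have "FF z [0..<n] ** TT z n q c = ?L ** ?M ** (?R ** adj2 ?R) ** Emat (q+1) c ** ?R"
    unfolding F TT_def by (simp add: matrix_mul_assoc)
  also have "\<dots> = ?L ** (?M ** Emat (q+1) c) ** ?R"
    by (simp add: adj2_right det2_FF matrix_mul_assoc)
  also have "\<dots> = ?L ** Emat (q+1) c ** ?R" by (simp add: Mmat_Emat)
  finally show ?thesis by simp
qed

lemma DF_T: "DF z [0..<n] h = FF z [0..<n] ** (\<Sum>q<n. TT z n q (h $ pos q))"
  unfolding DF_full bb.sum_right by (intro sum.cong) (auto simp: term_eq[simplified])

lemma trace_TT: "trace (TT z n q c) = 0"
proof -
  have "trace (TT z n q c) = trace (FF z [Suc q..<n] ** (adj2 (FF z [Suc q..<n]) ** Emat (q+1) c))"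
    unfolding TT_def by (rule trace_mul_sym)
  also have "\<dots> = trace ((FF z [Suc q..<n] ** adj2 (FF z [Suc q..<n])) ** Emat (q+1) c)"
    by (simp add: matrix_mul_assoc)
  also have "\<dots> = 0" by (simp add: adj2_right det2_FF trace_Emat)
  finally show ?thesis .
qed

lemma TT_0[simp]: "TT z n q 0 = 0"
  by (simp add: TT_def)

lemma FF_zero: "(\<forall>p\<in>set ps. z $ pos p = 0) \<Longrightarrow> FF z ps = mat 1"
  by (induction ps) (auto simp: Mmat_0)

definition Dg :: "complex^2^2" where "Dg = vector [vector [1, 0], vector [0, -1]]"

lemma Dg_trace: "trace (adj2 (Mmat j t) ** Dg ** Mmat j t) = 0"
  by (simp add: m2 trace_def Dg_def algebra_simps)
lemma Dg_val: "(Mmat j t ** (adj2 (Mmat j t) ** Dg ** Mmat j t) ** adj2 (Mmat j t))$1$1 = 1"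
  by (simp add: m2 Dg_def algebra_simps)



lemma sub_range: "range (DF z [0..<n]) \<subseteq> SL2_tangent (FF z [0..<n])"
  unfolding SL2_tangent_def
  by (auto simp: DF_T trace_sum trace_TT)

lemma R_lastM:
  assumes "m \<le> n - 1" "n \<ge> 1" "\<forall>p. m \<le> p \<and> p < n - 1 \<longrightarrow> z $ pos p = 0"
  shows "FF z [m..<n] = Mmat n (z $ pos (n - 1))"
proof -
  have "[m..<n] = [m..<n-1] @ [n-1]" using upt_Suc_append[OF assms(1)] assms(2) by simp
  moreover have "FF z [m..<n-1] = mat 1" using assms(3) by (intro FF_zero) auto
  ultimately show ?thesis using assms by (simp add: FF_append)
qed

lemma dirB:
  assumes n: "n \<ge> 2" and zero: "\<forall>p. 1 \<le> p \<and> p < n - 1 \<longrightarrow> z $ pos p = 0"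
  shows "\<not> SL2_tangent (FF z [0..<n]) \<subseteq> range (DF z [0..<n])"
proof
  let ?LM = "Mmat n (z $ pos (n - 1))"
  let ?P = "FF z [0..<n]"
  define f where "f Y = (?LM ** Y ** adj2 ?LM)$1$1" for Y
  have fT: "f (TT z n q c) = 0" if q: "q < n" for q c
  proof (cases "q < n - 1")
    case True
    have "FF z [Suc q..<n] = ?LM" using True n zero by (intro R_lastM) auto
    thus ?thesis unfolding f_def TT_def by (simp add: diag_lem det2_Mmat)
  next
    case False
    hence "q = n - 1" using q by simp
    hence "Suc q = n" "q + 1 = n" using n by auto
    thus ?thesis unfolding f_def TT_def by (simp add: conj_Mmat)
  qed
  have fS: "f (\<Sum>q<n. TT z n q (h q)) = 0" for h
    unfolding f_def bb.sum_right bb.sum_left sum_component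
    by (intro sum.neutral) (use fT in \<open>auto simp: f_def\<close>)
  define Y0 where "Y0 = adj2 ?LM ** Dg ** ?LM"
  assume sub: "SL2_tangent ?P \<subseteq> range (DF z [0..<n])"
  have "?P ** Y0 \<in> SL2_tangent ?P" unfolding SL2_tangent_def Y0_def using Dg_trace by blast
  with sub obtain h where "DF z [0..<n] h = ?P ** Y0" by auto
  hence "?P ** (\<Sum>q<n. TT z n q (h $ pos q)) = ?P ** Y0" by (simp add: DF_T)
  hence "(\<Sum>q<n. TT z n q (h $ pos q)) = Y0" by (rule cancel_left[OF det2_FF])
  hence "f Y0 = 0" using fS by metis
  moreover have "f Y0 = 1" unfolding f_def Y0_def by (rule Dg_val)
  ultimately show False by simp
qed



lemma dirA:
  fixes z :: "complex^'n::{finite,linorder}"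
  assumes nc: "n = CARD('n)" and n: "n \<ge> 3" and k: "1 \<le> k" "k \<le> n - 2" "z $ pos k \<noteq> 0"
    and after: "\<forall>p. k < p \<and> p < n - 1 \<longrightarrow> z $ pos p = 0"
  shows "SL2_tangent (FF z [0..<n]) \<subseteq> range (DF z [0..<n])"
proof
  fix X assume "X \<in> SL2_tangent (FF z [0..<n])"
  then obtain Y where X: "X = FF z [0..<n] ** Y" and trY: "trace Y = 0"
    unfolding SL2_tangent_def by auto
  let ?LM = "Mmat n (z $ pos (n - 1))"
  let ?Mk = "Mmat (Suc k) (z $ pos k)"
  have dLM: "det2 ?LM = 1" by (rule det2_Mmat)
  have aLM: "adj2 ?LM ** ?LM = mat 1" by (rule adj2_left[OF dLM])
  have Rk: "FF z [Suc k..<n] = ?LM" using n k after by (intro R_lastM) auto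
  have Rk1: "FF z [k..<n] = ?Mk ** ?LM"
    using k n Rk by (simp add: upt_conv_Cons)
  have T1: "TT z n (k-1) a = adj2 ?LM ** (adj2 ?Mk ** Emat k a ** ?Mk) ** ?LM" for a
    using k Rk1 by (simp add: TT_def adj2_mult matrix_mul_assoc)
  have T2: "TT z n k b = adj2 ?LM ** Emat (Suc k) b ** ?LM" for b
    using Rk by (simp add: TT_def)
  have T3: "TT z n (Suc k) c = adj2 ?LM ** Emat (Suc (Suc k)) c ** ?LM" for c
  proof (cases "Suc k = n - 1")
    case True
    hence e: "n = Suc (Suc k)" using n by simp
    have "TT z n (Suc k) c = Emat (Suc (Suc k)) c" unfolding TT_def using e by simp
    also have "\<dots> = adj2 ?LM ** Emat (Suc (Suc k)) c ** ?LM" unfolding e by (simp add: comm_Mmat)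
    finally show ?thesis .
  next
    case False
    have "FF z [Suc (Suc k)..<n] = ?LM" using False n k after by (intro R_lastM) auto
    thus ?thesis by (simp add: TT_def)
  qed
  define Y' where "Y' = ?LM ** Y ** adj2 ?LM"
  have "trace Y' = trace (adj2 ?LM ** (?LM ** Y))" unfolding Y'_def
    by (metis trace_mul_sym)
  also have "adj2 ?LM ** (?LM ** Y) = Y" by (simp only: matrix_mul_assoc aLM matrix_mul_lid)
  finally have trY': "trace Y' = 0" using trY by simp
  obtain a b c where abc: "adj2 ?Mk ** Emat k a ** ?Mk + Emat (Suc k) b + Emat (Suc (Suc k)) c = Y'"
    using solve_lem[OF k(3) trY'] by blast
  have YY: "adj2 ?LM ** Y' ** ?LM = Y"
    unfolding Y'_def by (simp only: matrix_mul_assoc aLM matrix_mul_lid)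
      (simp only: matrix_mul_assoc[symmetric] aLM matrix_mul_rid)
  define g where "g q = (if q = k - 1 then a else if q = k then b else if q = Suc k then c else 0)" for q
  define h :: "complex^'n::{finite,linorder}" where "h = (\<chi> i. g (idx i))"
  have hpos: "q < n \<Longrightarrow> h $ pos q = g q" for q
  proof -
    assume "q < n"
    hence "idx (pos q :: 'n) = q" using nc idx_pos by blast
    thus ?thesis by (simp add: h_def)
  qed
  have "(\<Sum>q<n. TT z n q (h $ pos q)) = (\<Sum>q<n. TT z n q (g q))"
    by (intro sum.cong) (auto simp: hpos)
  also have "\<dots> = (\<Sum>q\<in>{k-1, k, Suc k}. TT z n q (g q))"
    using k n by (intro sum.mono_neutral_right) (auto simp: g_def)
  also have "\<dots> = TT z n (k-1) a + TT z n k b + TT z n (Suc k) c"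
  proof -
    have d: "k - 1 \<notin> {k, Suc k}" "k - 1 \<noteq> k" "k - 1 \<noteq> Suc k" using k by auto
    show ?thesis by (subst sum.insert) (use d in \<open>auto simp: g_def add.assoc\<close>)
  qed
  also have "\<dots> = Y"
    unfolding T1 T2 T3 abc[symmetric] YY[symmetric] by (simp add: bb.add_left bb.add_right)
  finally have "DF z [0..<n] h = X" by (simp add: DF_T X)
  thus "X \<in> range (DF z [0..<n])" by (metis rangeI)
qed



theorem lemma1:
  fixes z :: "complex^'n::{finite,linorder}"
  assumes "CARD('n) \<ge> 4"
  shows "submersion_SL2_at Phi z \<longleftrightarrow>
           (\<exists>i. 2 \<le> idx i + 1 \<and> idx i + 1 \<le> CARD('n) - 1 \<and> z $ i \<noteq> 0)"
proof -
  define n where "n = CARD('n)"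
  have n4: "n \<ge> 4" using assms n_def by simp
  have PhiF: "Phi = (\<lambda>z::complex^'n::{finite,linorder}. FF z [0..<n])" by (rule ext) (simp add: Phi_FF n_def)
  have PhiZ: "Phi z = FF z [0..<n]" by (simp add: Phi_FF n_def)
  have der: "(Phi has_derivative DF z [0..<n]) (at z)" unfolding PhiF by (rule FF_deriv)
  have sub_iff: "submersion_SL2_at Phi z \<longleftrightarrow> SL2_tangent (FF z [0..<n]) \<subseteq> range (DF z [0..<n])"
  proof
    assume "submersion_SL2_at Phi z"
    then obtain D where D: "(Phi has_derivative D) (at z)" "range D = SL2_tangent (Phi z)"
      unfolding submersion_SL2_at_def by blast
    have "D = DF z [0..<n]" using has_derivative_unique[OF D(1) der] .
    thus "SL2_tangent (FF z [0..<n]) \<subseteq> range (DF z [0..<n])" using D(2) PhiZ by simp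
  next
    assume "SL2_tangent (FF z [0..<n]) \<subseteq> range (DF z [0..<n])"
    hence "range (DF z [0..<n]) = SL2_tangent (Phi z)" using sub_range[of z n] PhiZ by auto
    thus "submersion_SL2_at Phi z" using der unfolding submersion_SL2_at_def by blast
  qed
  have ex_iff: "(\<exists>i. 2 \<le> idx i + 1 \<and> idx i + 1 \<le> CARD('n) - 1 \<and> z $ i \<noteq> 0) \<longleftrightarrow>
      (\<exists>p. 1 \<le> p \<and> p \<le> n - 2 \<and> z $ pos p \<noteq> 0)"
  proof
    assume "\<exists>i. 2 \<le> idx i + 1 \<and> idx i + 1 \<le> CARD('n) - 1 \<and> z $ i \<noteq> 0"
    then obtain i where i: "2 \<le> idx i + 1" "idx i + 1 \<le> CARD('n) - 1" "z $ i \<noteq> 0" by blast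
    show "\<exists>p. 1 \<le> p \<and> p \<le> n - 2 \<and> z $ pos p \<noteq> 0"
      by (rule exI[of _ "idx i"]) (use i n_def in \<open>auto simp: pos_idx\<close>)
  next
    assume "\<exists>p. 1 \<le> p \<and> p \<le> n - 2 \<and> z $ pos p \<noteq> 0"
    then obtain p where p: "1 \<le> p" "p \<le> n - 2" "z $ pos p \<noteq> 0" by blast
    have "p < CARD('n)" using p n4 n_def by simp
    hence ip: "idx (pos p :: 'n) = p" by (rule idx_pos)
    show "\<exists>i. 2 \<le> idx i + 1 \<and> idx i + 1 \<le> CARD('n) - 1 \<and> z $ i \<noteq> 0"
      by (rule exI[of _ "pos p"]) (use p ip n_def n4 in auto)
  qed
  show ?thesis
    unfolding sub_iff ex_iff
  proof
    assume sub: "SL2_tangent (FF z [0..<n]) \<subseteq> range (DF z [0..<n])"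
    show "\<exists>p. 1 \<le> p \<and> p \<le> n - 2 \<and> z $ pos p \<noteq> 0"
    proof (rule ccontr)
      assume "\<not> ?thesis"
      hence "\<forall>p. 1 \<le> p \<and> p < n - 1 \<longrightarrow> z $ pos p = 0" by force
      with dirB[of n z] n4 sub show False by auto
    qed
  next
    assume "\<exists>p. 1 \<le> p \<and> p \<le> n - 2 \<and> z $ pos p \<noteq> 0"
    define K where "K = {p. 1 \<le> p \<and> p \<le> n - 2 \<and> z $ pos p \<noteq> 0}"
    have fK: "finite K" unfolding K_def by (rule finite_subset[of _ "{..n}"]) auto
    have neK: "K \<noteq> {}" using \<open>\<exists>p. _\<close> K_def by auto
    define k where "k = Max K"
    have kK: "k \<in> K" unfolding k_def using fK neK by (rule Max_in)
    have after: "\<forall>p. k < p \<and> p < n - 1 \<longrightarrow> z $ pos p = 0"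
    proof (intro allI impI)
      fix p assume p: "k < p \<and> p < n - 1"
      show "z $ pos p = 0"
      proof (rule ccontr)
        assume "z $ pos p \<noteq> 0"
        hence "p \<in> K" using p kK unfolding K_def by auto
        hence "p \<le> k" unfolding k_def using fK by simp
        thus False using p by simp
      qed
    qed
    show "SL2_tangent (FF z [0..<n]) \<subseteq> range (DF z [0..<n])"
      using dirA[where n=n and z=z and k=k] n_def n4 kK after unfolding K_def by auto
  qed
qed


end
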